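(* Let $X=L^\infty[-1,1]$ and define $T:X\to X$ by $(Tx)(t)=0$ for $t\le 0$ and $(Tx)(t)=x(t)+x(-t)$ for $t>0$. Then $T$ is positive and satisfies condition $(\beta_+)$, but $T$ does not satisfy condition $(\beta)$.
   Context: For a subset $A$ of a vector lattice $X$, $A^d=\{x\in X: |x|\wedge|a|=0 \text{ for all } a\in A\}$ and $A^{dd}=(A^d)^d$. For $a,b\in X$ we write $a\lhd b$ if $\{a\}^{dd}\subseteq\{b\}^{dd}$. A linear operator $T$ satisfies condition $(\beta)$ if $Ta\lhd Tb$ whenever $a\lhd b$; it satisfies condition $(\beta_+)$ if $Ta\lhd Tb$ whenever $a\lhd b$ with $a,b\ge 0$. *)

theory Defs
  imports "HOL-Analysis.Analysis"
begin

text \<open>The measure space [-1,1] with Lebesgue measure.\<close>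
definition MI :: "real measure" where
  "MI = restrict_space lebesgue {-1..1}"

text \<open>Representatives of elements of L-infinity[-1,1]: measurable, essentially bounded.
  Elements of the vector lattice are the classes modulo a.e. equality; all
  notions below are invariant under a.e. equality.\<close>
definition Linf :: "(real \<Rightarrow> real) set" where
  "Linf = {x. x \<in> borel_measurable MI \<and> (\<exists>C. AE t in MI. \<bar>x t\<bar> \<le> C)}"

definition ae_eq :: "(real \<Rightarrow> real) \<Rightarrow> (real \<Rightarrow> real) \<Rightarrow> bool" where
  "ae_eq x y \<longleftrightarrow> (AE t in MI. x t = y t)"

text \<open>Order: x \<ge> 0 in L-infinity.\<close>
definition nonneg :: "(real \<Rightarrow> real) \<Rightarrow> bool" where
  "nonneg x \<longleftrightarrow> (AE t in MI. 0 \<le> x t)"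

text \<open>Disjointness: |x| inf |a| = 0 in L-infinity.\<close>
definition disj :: "(real \<Rightarrow> real) \<Rightarrow> (real \<Rightarrow> real) \<Rightarrow> bool" where
  "disj x a \<longleftrightarrow> ae_eq (\<lambda>t. min \<bar>x t\<bar> \<bar>a t\<bar>) (\<lambda>t. 0)"

definition dis :: "(real \<Rightarrow> real) set \<Rightarrow> (real \<Rightarrow> real) set" where
  "dis A = {x \<in> Linf. \<forall>a\<in>A. disj x a}"

definition ddis :: "(real \<Rightarrow> real) set \<Rightarrow> (real \<Rightarrow> real) set" where
  "ddis A = dis (dis A)"

text \<open>a \<lhd> b iff {a}^dd \<subseteq> {b}^dd.\<close>
definition lhd :: "(real \<Rightarrow> real) \<Rightarrow> (real \<Rightarrow> real) \<Rightarrow> bool" where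
  "lhd a b \<longleftrightarrow> ddis {a} \<subseteq> ddis {b}"

definition cond_beta :: "((real \<Rightarrow> real) \<Rightarrow> (real \<Rightarrow> real)) \<Rightarrow> bool" where
  "cond_beta S \<longleftrightarrow> (\<forall>a\<in>Linf. \<forall>b\<in>Linf. lhd a b \<longrightarrow> lhd (S a) (S b))"

definition cond_beta_plus :: "((real \<Rightarrow> real) \<Rightarrow> (real \<Rightarrow> real)) \<Rightarrow> bool" where
  "cond_beta_plus S \<longleftrightarrow> (\<forall>a\<in>Linf. \<forall>b\<in>Linf. nonneg a \<longrightarrow> nonneg b \<longrightarrow>
      lhd a b \<longrightarrow> lhd (S a) (S b))"

definition positive_op :: "((real \<Rightarrow> real) \<Rightarrow> (real \<Rightarrow> real)) \<Rightarrow> bool" where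
  "positive_op S \<longleftrightarrow> (\<forall>x\<in>Linf. nonneg x \<longrightarrow> nonneg (S x))"

text \<open>The operator T.\<close>
definition Top :: "(real \<Rightarrow> real) \<Rightarrow> (real \<Rightarrow> real)" where
  "Top x = (\<lambda>t. if t \<le> 0 then 0 else x t + x (-t))"

end

theory Submission
  imports Defs
begin

lemma AE_MI_iff: "(AE t in MI. P t) \<longleftrightarrow> (AE t in lborel. t \<in> {-1..1} \<longrightarrow> P t)"
  unfolding MI_def by (simp add: AE_restrict_space_iff AE_completion_iff)

lemma AE_lborel_refl:
  assumes "AE t in lborel. P t" shows "AE t in lborel. P (- t :: real)"
proof -
  from assms obtain N where N: "N \<in> null_sets lborel" "{x \<in> space lborel. \<not> P x} \<subseteq> N"
    unfolding eventually_ae_filter by blast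
  have P: "P t" if "t \<notin> N" for t using N(2) that by auto
  have Nb: "N \<in> sets borel" using null_setsD2[OF N(1)] by simp
  have pr: "Measurable.pred borel (\<lambda>x::real. x \<notin> N)"
  proof -
    have "{x \<in> space borel. x \<notin> N} = space borel - N" by auto
    moreover have "space borel - N \<in> sets borel" using Nb by (rule sets.compl_sets)
    ultimately show ?thesis unfolding Measurable.pred_def by simp
  qed
  have "AE t in lborel. t \<notin> N" using N(1) by (rule AE_not_in)
  from AE_borel_affine[of "-1" "\<lambda>x. x \<notin> N" 0, OF _ pr this]
  have "AE t in lborel. 0 + (-1) * t \<notin> N" by simp
  then show ?thesis by (rule eventually_mono) (simp add: P)
qed

lemma AE_MI_refl:
  assumes "AE t in MI. P t" shows "AE t in MI. P (- t)"
proof -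
  have "AE t in lborel. t \<in> {-1..1} \<longrightarrow> P t" using assms by (simp add: AE_MI_iff)
  from AE_lborel_refl[OF this] have "AE t in lborel. t \<in> {-1..1} \<longrightarrow> P (- t)"
    by (rule eventually_mono) auto
  then show ?thesis by (simp add: AE_MI_iff)
qed

lemma uminus_MI: "uminus \<in> MI \<rightarrow>\<^sub>M MI"
proof -
  have "(*\<^sub>R) (-1::real) \<in> (lebesgue :: real measure) \<rightarrow>\<^sub>M lebesgue" by (rule lebesgue_measurable_scaling)
  then have "(uminus :: real \<Rightarrow> real) \<in> lebesgue \<rightarrow>\<^sub>M lebesgue"
  proof -
    have "((*\<^sub>R) (-1::real) :: real \<Rightarrow> real) = uminus" by (rule ext) simp
    with \<open>(*\<^sub>R) (-1::real) \<in> lebesgue \<rightarrow>\<^sub>M lebesgue\<close> show ?thesis by metis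
  qed
  then show ?thesis unfolding MI_def
  proof (rule measurable_restrict_space3)
    show "uminus \<in> {-1..1::real} \<rightarrow> {-1..1}" by (simp add: Pi_iff)
  qed
qed

lemma meas_refl: "x \<in> borel_measurable MI \<Longrightarrow> (\<lambda>t. x (- t)) \<in> borel_measurable MI"
  using measurable_compose[OF uminus_MI] by blast

lemma id_MI: "(\<lambda>t. t) \<in> borel_measurable MI"
  unfolding MI_def by (intro measurable_restrict_space1 measurable_completion) simp

lemma min_abs_zero: "(min \<bar>u\<bar> \<bar>v\<bar> = (0::real)) \<longleftrightarrow> u = 0 \<or> v = 0"
  by (auto simp: min_def)

lemma disj_iff: "disj x a \<longleftrightarrow> (AE t in MI. x t = 0 \<or> a t = 0)"
  unfolding disj_def ae_eq_def min_abs_zero ..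

lemma ind_Linf:
  assumes "a \<in> Linf" shows "(\<lambda>t. if a t = 0 then 1 else 0 :: real) \<in> Linf"
proof -
  have am: "a \<in> borel_measurable MI" using assms by (simp add: Linf_def)
  have s: "{t \<in> space MI. a t = 0} \<in> sets MI"
  proof -
    have "a -` {0} \<inter> space MI \<in> sets MI" using measurable_sets[OF am, of "{0}"] by simp
    moreover have "a -` {0} \<inter> space MI = {t \<in> space MI. a t = 0}" by auto
    ultimately show ?thesis by simp
  qed
  have "(\<lambda>t. if a t = 0 then 1 else 0 :: real) \<in> borel_measurable MI"
    by (rule measurable_If[OF measurable_const measurable_const s]) auto
  moreover have "AE t in MI. \<bar>(if a t = 0 then 1 else 0 :: real)\<bar> \<le> 1" by simp
  ultimately show ?thesis unfolding Linf_def by blast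
qed

lemma ddis_iff:
  assumes "a \<in> Linf"
  shows "y \<in> ddis {a} \<longleftrightarrow> y \<in> Linf \<and> (AE t in MI. a t = 0 \<longrightarrow> y t = 0)"
proof
  assume y: "y \<in> ddis {a}"
  let ?z = "\<lambda>t. if a t = 0 then 1 else 0 :: real"
  have "?z \<in> dis {a}" using ind_Linf[OF assms] by (simp add: dis_def disj_iff)
  then have "disj y ?z" "y \<in> Linf" using y by (auto simp: ddis_def dis_def)
  then show "y \<in> Linf \<and> (AE t in MI. a t = 0 \<longrightarrow> y t = 0)"
  proof -
    have "AE t in MI. y t = 0 \<or> ?z t = 0" using \<open>disj y ?z\<close> by (simp add: disj_iff)
    then have "AE t in MI. a t = 0 \<longrightarrow> y t = 0" by (rule eventually_mono) (simp split: if_splits)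
    then show ?thesis using \<open>y \<in> Linf\<close> by blast
  qed
next
  assume y: "y \<in> Linf \<and> (AE t in MI. a t = 0 \<longrightarrow> y t = 0)"
  show "y \<in> ddis {a}" unfolding ddis_def
  proof (subst dis_def, safe)
    show "y \<in> Linf" using y by blast
    fix x assume "x \<in> dis {a}"
    then have "AE t in MI. x t = 0 \<or> a t = 0" by (simp add: dis_def disj_iff)
    moreover have "AE t in MI. a t = 0 \<longrightarrow> y t = 0" using y by blast
    ultimately show "disj y x" unfolding disj_iff by eventually_elim auto
  qed
qed

lemma lhd_iff:
  assumes "a \<in> Linf" "b \<in> Linf"
  shows "lhd a b \<longleftrightarrow> (AE t in MI. b t = 0 \<longrightarrow> a t = 0)"
proof
  assume "lhd a b"
  moreover have "a \<in> ddis {a}" using assms by (simp add: ddis_iff)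
  ultimately have "a \<in> ddis {b}" by (auto simp: lhd_def)
  then show "AE t in MI. b t = 0 \<longrightarrow> a t = 0" using ddis_iff[OF assms(2)] by blast
next
  assume ab: "AE t in MI. b t = 0 \<longrightarrow> a t = 0"
  show "lhd a b" unfolding lhd_def
  proof
    fix y assume "y \<in> ddis {a}"
    then have "y \<in> Linf" "AE t in MI. a t = 0 \<longrightarrow> y t = 0" using assms by (auto simp: ddis_iff)
    moreover have "AE t in MI. b t = 0 \<longrightarrow> y t = 0"
      using ab \<open>AE t in MI. a t = 0 \<longrightarrow> y t = 0\<close> by eventually_elim auto
    ultimately show "y \<in> ddis {b}" using ddis_iff[OF assms(2)] by blast
  qed
qed
lemma space_MI: "space MI = {-1..1}" by (simp add: MI_def)

lemma Top_meas: assumes "x \<in> borel_measurable MI" shows "Top x \<in> borel_measurable MI"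
proof -
  have 1: "(\<lambda>t. x t + x (- t)) \<in> borel_measurable MI"
    by (intro borel_measurable_add assms meas_refl)
  have 2: "{t \<in> space MI. t \<le> (0::real)} \<in> sets MI"
    using borel_measurable_le[OF id_MI measurable_const[of 0]] by simp
  have 3: "(\<lambda>t. 0::real) \<in> borel_measurable MI" by (rule measurable_const) simp
  have "(\<lambda>t. if t \<le> 0 then 0 else x t + x (- t)) \<in> borel_measurable MI"
    by (rule measurable_If[OF 3 1 2])
  then show ?thesis unfolding Top_def .
qed
lemma Top_Linf: assumes "x \<in> Linf" shows "Top x \<in> Linf"
proof -
  have [measurable]: "x \<in> borel_measurable MI" and "\<exists>C. AE t in MI. \<bar>x t\<bar> \<le> C"
    using assms by (auto simp: Linf_def)
  then obtain C where C: "AE t in MI. \<bar>x t\<bar> \<le> C" by blast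
  have "Top x \<in> borel_measurable MI" by (rule Top_meas) simp
  moreover have "AE t in MI. \<bar>Top x t\<bar> \<le> 2 * C"
    using C AE_MI_refl[OF C] by eventually_elim (auto simp: Top_def)
  ultimately show ?thesis unfolding Linf_def by blast
qed

theorem mainTheorem15:
  shows "(\<forall>x\<in>Linf. Top x \<in> Linf)
    \<and> (\<forall>x\<in>Linf. \<forall>y\<in>Linf. ae_eq x y \<longrightarrow> ae_eq (Top x) (Top y))
    \<and> positive_op Top \<and> cond_beta_plus Top \<and> \<not> cond_beta Top"
proof (intro conjI)
  show "\<forall>x\<in>Linf. Top x \<in> Linf" using Top_Linf by blast
  show "\<forall>x\<in>Linf. \<forall>y\<in>Linf. ae_eq x y \<longrightarrow> ae_eq (Top x) (Top y)"
  proof (intro ballI impI)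
    fix x y assume "ae_eq x y"
    then have h: "AE t in MI. x t = y t" by (simp add: ae_eq_def)
    show "ae_eq (Top x) (Top y)" unfolding ae_eq_def
      using h AE_MI_refl[OF h] by eventually_elim (auto simp: Top_def)
  qed
  show "positive_op Top" unfolding positive_op_def
  proof (intro ballI impI)
    fix x assume "nonneg x"
    then have h: "AE t in MI. 0 \<le> x t" by (simp add: nonneg_def)
    show "nonneg (Top x)" unfolding nonneg_def
      using h AE_MI_refl[OF h] by eventually_elim (auto simp: Top_def)
  qed
  show "cond_beta_plus Top" unfolding cond_beta_plus_def
  proof (intro ballI impI)
    fix a b assume ab: "a \<in> Linf" "b \<in> Linf" "nonneg a" "nonneg b" "lhd a b"
    have h1: "AE t in MI. 0 \<le> b t" using ab by (simp add: nonneg_def)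
    have h2: "AE t in MI. b t = 0 \<longrightarrow> a t = 0" using ab by (simp add: lhd_iff)
    have "AE t in MI. Top b t = 0 \<longrightarrow> Top a t = 0"
      using h1 h2 AE_MI_refl[OF h1] AE_MI_refl[OF h2] by eventually_elim (auto simp: Top_def)
    then show "lhd (Top a) (Top b)" using ab by (simp add: lhd_iff Top_Linf)
  qed
  show "\<not> cond_beta Top"
  proof
    assume cb: "cond_beta Top"
    define a where "a = (\<lambda>t::real. 1::real)"
    define b where "b = (\<lambda>t::real. if t < 0 then -1 else 1::real)"
    have aL: "a \<in> Linf" unfolding Linf_def a_def by auto
    have "b \<in> borel_measurable MI" unfolding b_def
    proof (rule measurable_If)
      show "{t \<in> space MI. t < 0} \<in> sets MI"
        using borel_measurable_less[OF id_MI measurable_const[of 0]] by simp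
    qed simp_all
    moreover have "AE t in MI. \<bar>b t\<bar> \<le> 1" by (simp add: b_def)
    ultimately have bL: "b \<in> Linf" unfolding Linf_def by blast
    have "lhd a b" using aL bL by (simp add: lhd_iff b_def)
    then have "lhd (Top a) (Top b)" using cb aL bL by (simp add: cond_beta_def)
    then have "AE t in MI. Top b t = 0 \<longrightarrow> Top a t = 0" using aL bL by (simp add: lhd_iff Top_Linf)
    then have "AE t in MI. t \<le> 0" by (rule eventually_mono) (auto simp: Top_def a_def b_def split: if_splits)
    then have "AE t in lborel. t \<in> {-1..1} \<longrightarrow> t \<le> (0::real)" by (simp add: AE_MI_iff)
    moreover have "{t \<in> space lborel. \<not> (t \<in> {-1..1} \<longrightarrow> t \<le> (0::real))} = {0<..1}" by auto
    ultimately have "emeasure lborel {0<..(1::real)} = 0"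
      by (subst (asm) AE_iff_measurable[OF _ refl]) auto
    then show False by simp
  qed
qed

end
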